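(* Let $\ell$ and $m$ be positive integers with $2\le \ell\le m$, let $G$ be a torsion-free abelian group written multiplicatively, and let $\mathcal{A}=(A_1,\dots,A_m)$ be a sequence of nonempty finite subsets of $G$. Put $A=A_1\cup\cdots\cup A_m$. Then \[ |\Pi^{\ell}(\mathcal{A})| \ \ge\ \sum_{a\in A}\mu_{\mathcal{A}}(a)-\ell+1, \] and this lower bound is best possible (there exist such sequences for which equality holds).
   Context: For $S\subseteq G$, $\chi_S$ is the indicator function of $S$. For $a\in A$, $\mu_{\mathcal{A}}(a)=\min\big(\ell,\sum_{j=1}^m\chi_{A_j}(a)\big)$. $\Pi^{\ell}(\mathcal{A})$ is the set of all products $a_{i_1}\cdots a_{i_\ell}$ with $i_1,\dots,i_\ell\in[1,m]$ pairwise distinct and $a_{i_j}\in A_{i_j}$ (since $G$ is abelian, the order is irrelevant). $[x,y]=\{n\in\mathbb{Z}:x\le n\le y\}$. *)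

theory Defs
  imports "HOL-Algebra.Algebra"
begin

definition torsion_free :: "('a, 'b) monoid_scheme \<Rightarrow> bool" where
  "torsion_free G \<longleftrightarrow>
     (\<forall>x\<in>carrier G. \<forall>n::nat. n > 0 \<longrightarrow> x [^]\<^bsub>G\<^esub> n = \<one>\<^bsub>G\<^esub> \<longrightarrow> x = \<one>\<^bsub>G\<^esub>)"

text \<open>Restricted products: products a_{i_1} ... a_{i_l} with pairwise distinct indices
  i_1,...,i_l in [1,m] and a_{i_j} in A_{i_j}.  Since G is abelian, such a product is
  determined by the index set I = {i_1,...,i_l} and the choice function on I.\<close>
definition restricted_products ::
  "('a, 'b) monoid_scheme \<Rightarrow> nat \<Rightarrow> nat \<Rightarrow> (nat \<Rightarrow> 'a set) \<Rightarrow> 'a set" where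
  "restricted_products G l m A =
     {finprod G a I | I a. I \<subseteq> {1..m} \<and> card I = l \<and> (\<forall>i\<in>I. a i \<in> A i)}"

definition mult_mu :: "nat \<Rightarrow> nat \<Rightarrow> (nat \<Rightarrow> 'a set) \<Rightarrow> 'a \<Rightarrow> nat" where
  "mult_mu l m A x = min l (card {j \<in> {1..m}. x \<in> A j})"

definition admissible_seq :: "('a, 'b) monoid_scheme \<Rightarrow> nat \<Rightarrow> (nat \<Rightarrow> 'a set) \<Rightarrow> bool" where
  "admissible_seq G m A \<longleftrightarrow> (\<forall>j\<in>{1..m}. A j \<noteq> {} \<and> finite (A j) \<and> A j \<subseteq> carrier G)"

end

theory Submission
  imports Defs
begin


lemma (in comm_group) pos_cone_pow:
  assumes "M \<subseteq> carrier G" "\<forall>x\<in>M. \<forall>y\<in>M. x \<otimes> y \<in> M" "p \<in> M" "n > 0"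
  shows "p [^] (n::nat) \<in> M"
  using assms(4)
proof (induction n)
  case 0 then show ?case by simp
next
  case (Suc n)
  show ?case
  proof (cases "n = 0")
    case True then show ?thesis using assms by auto
  next
    case False then show ?thesis using Suc assms by auto
  qed
qed

lemma (in comm_group) torsion_free_cone:
  assumes tf: "torsion_free G"
  shows "\<exists>P. P \<subseteq> carrier G \<and> (\<forall>x\<in>P. \<forall>y\<in>P. x \<otimes> y \<in> P) \<and> \<one> \<notin> P
            \<and> (\<forall>x\<in>carrier G. x \<noteq> \<one> \<longrightarrow> x \<in> P \<or> inv x \<in> P)"
proof -
  define F where "F = {P. P \<subseteq> carrier G \<and> (\<forall>x\<in>P. \<forall>y\<in>P. x \<otimes> y \<in> P) \<and> \<one> \<notin> P}"
  have "\<forall>C\<in>chains F. \<Union>C \<in> F"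
  proof
    fix C assume C: "C \<in> chains F"
    have "\<forall>x\<in>\<Union>C. \<forall>y\<in>\<Union>C. x \<otimes> y \<in> \<Union>C"
    proof (intro ballI)
      fix x y assume "x \<in> \<Union>C" "y \<in> \<Union>C"
      then obtain P Q where PQ: "P \<in> C" "Q \<in> C" "x \<in> P" "y \<in> Q" by auto
      from C PQ have "P \<subseteq> Q \<or> Q \<subseteq> P" unfolding chains_def chain_subset_def by auto
      then show "x \<otimes> y \<in> \<Union>C"
      proof
        assume "P \<subseteq> Q" then show ?thesis using PQ C unfolding chains_def F_def by blast
      next
        assume "Q \<subseteq> P" then show ?thesis using PQ C unfolding chains_def F_def by blast
      qed
    qed
    then show "\<Union>C \<in> F" using C unfolding chains_def F_def by auto
  qed
  from Zorn_Lemma[OF this] obtain M where M: "M \<in> F" and Mmax: "\<forall>S\<in>F. M \<subseteq> S \<longrightarrow> S = M"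
    by blast
  have Mc: "M \<subseteq> carrier G" and Mm: "\<forall>x\<in>M. \<forall>y\<in>M. x \<otimes> y \<in> M" and M1: "\<one> \<notin> M"
    using M unfolding F_def by auto
  have key: "\<exists>p\<in>M. \<exists>n>0. p \<otimes> z [^] (n::nat) = \<one>"
    if z: "z \<in> carrier G" "z \<notin> M" "z \<noteq> \<one>" for z
  proof -
    define Q where "Q = {p \<otimes> z [^] (n::nat) | p n. p \<in> insert \<one> M \<and> (p \<in> M \<or> n > 0)}"
    have "\<one> \<in> Q"
    proof (rule ccontr)
      assume n1: "\<one> \<notin> Q"
      have Qc: "Q \<subseteq> carrier G" unfolding Q_def using Mc z by auto
      have Qm: "\<forall>x\<in>Q. \<forall>y\<in>Q. x \<otimes> y \<in> Q"
      proof (intro ballI)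
        fix x y assume "x \<in> Q" "y \<in> Q"
        then obtain p n q k where pq: "x = p \<otimes> z [^] (n::nat)" "p \<in> insert \<one> M" "p \<in> M \<or> n > 0"
          "y = q \<otimes> z [^] (k::nat)" "q \<in> insert \<one> M" "q \<in> M \<or> k > 0"
          unfolding Q_def by blast
        have pc: "p \<in> carrier G" "q \<in> carrier G" using pq Mc by auto
        have "x \<otimes> y = (p \<otimes> q) \<otimes> z [^] (n + k)"
          using pc z pq by (simp add: m_ac nat_pow_mult[symmetric])
        moreover have "p \<otimes> q \<in> insert \<one> M" using pq Mm pc by auto
        moreover have "p \<otimes> q \<in> M \<or> n + k > 0" using pq Mm pc by auto
        ultimately show "x \<otimes> y \<in> Q" unfolding Q_def by blast
      qed
      have "Q \<in> F" using Qc Qm n1 unfolding F_def by auto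
      moreover have "M \<subseteq> Q"
      proof
        fix p assume "p \<in> M" then have "p = p \<otimes> z [^] (0::nat)" "p \<in> insert \<one> M" using Mc by auto
        then show "p \<in> Q" unfolding Q_def using \<open>p \<in> M\<close> by blast
      qed
      ultimately have "Q = M" using Mmax by auto
      moreover have "z \<in> Q"
      proof -
        have "\<exists>p n. z = p \<otimes> z [^] (n::nat) \<and> p \<in> insert \<one> M \<and> (p \<in> M \<or> n > 0)"
          by (rule exI[of _ "\<one>"], rule exI[of _ "1::nat"]) (use z in simp)
        then show ?thesis unfolding Q_def by simp
      qed
      ultimately show False using z by auto
    qed
    then obtain p n where pn: "\<one> = p \<otimes> z [^] (n::nat)" "p \<in> insert \<one> M" "p \<in> M \<or> n > 0"
      unfolding Q_def by blast
    show ?thesis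
    proof (cases "p = \<one>")
      case True
      then have "z [^] n = \<one>" "n > 0" using pn M1 z by auto
      then show ?thesis using tf z unfolding torsion_free_def by auto
    next
      case False
      then have "p \<in> M" using pn by auto
      moreover have "n > 0" using pn False \<open>p \<in> M\<close> Mc by (cases "n = 0") auto
      ultimately show ?thesis using pn by auto
    qed
  qed
  have "x \<in> M \<or> inv x \<in> M" if x: "x \<in> carrier G" "x \<noteq> \<one>" for x
  proof (rule ccontr)
    assume nx: "\<not> (x \<in> M \<or> inv x \<in> M)"
    obtain p n where p: "p \<in> M" "n > 0" "p \<otimes> x [^] (n::nat) = \<one>" using key[of x] x nx by auto
    have ix: "inv x \<in> carrier G" "inv x \<noteq> \<one>" using x by auto
    obtain q k where q: "q \<in> M" "k > 0" "q \<otimes> (inv x) [^] (k::nat) = \<one>" using key[OF ix(1) _ ix(2)] nx by auto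
    have pc: "p \<in> carrier G" "q \<in> carrier G" using p q Mc by auto
    have "(p \<otimes> x [^] n) [^] k = \<one>" using p by simp
    then have e1: "p [^] k \<otimes> x [^] (n * k) = \<one>" using pc x by (simp add: nat_pow_distrib nat_pow_pow)
    have "(q \<otimes> (inv x) [^] k) [^] n = \<one>" using q by simp
    then have e2: "q [^] n \<otimes> (inv x) [^] (n * k) = \<one>" using pc x
      by (simp add: nat_pow_distrib nat_pow_pow mult.commute)
    have e3: "x [^] (n * k) \<otimes> (inv x) [^] (n * k) = \<one>"
      using x by (simp add: nat_pow_distrib[symmetric])
    have "p [^] k \<otimes> q [^] n = (p [^] k \<otimes> x [^] (n * k)) \<otimes> (q [^] n \<otimes> (inv x) [^] (n * k))"
      using e3 pc x by (simp add: m_ac)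
    also have "\<dots> = \<one>" using e1 e2 by simp
    finally have "p [^] k \<otimes> q [^] n = \<one>" .
    moreover have "p [^] k \<otimes> q [^] n \<in> M"
      using pos_cone_pow[OF Mc Mm p(1) q(2)] pos_cone_pow[OF Mc Mm q(1) p(2)] Mm by auto
    ultimately show False using M1 by auto
  qed
  then show ?thesis using Mc Mm M1 by blast
qed




definition rp :: "('a, 'b) monoid_scheme \<Rightarrow> nat \<Rightarrow> nat set \<Rightarrow> (nat \<Rightarrow> 'a set) \<Rightarrow> 'a set" where
  "rp G l K A = {finprod G a I | I a. I \<subseteq> K \<and> card I = l \<and> (\<forall>i\<in>I. a i \<in> A i)}"

definition mu :: "nat \<Rightarrow> nat set \<Rightarrow> (nat \<Rightarrow> 'a set) \<Rightarrow> 'a \<Rightarrow> nat" where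
  "mu l K A x = min l (card {j \<in> K. x \<in> A j})"

lemma double_count:
  assumes "finite K" "\<forall>j\<in>K. finite (A j)"
  shows "(\<Sum>a\<in>(\<Union>j\<in>K. A j). card {j\<in>K. a \<in> A j}) = (\<Sum>j\<in>K. card (A j))"
proof -
  define U where "U = (\<Union>j\<in>K. A j)"
  have fU: "finite U" using assms unfolding U_def by auto
  have "(\<Sum>a\<in>U. card {j\<in>K. a \<in> A j}) = (\<Sum>a\<in>U. \<Sum>j\<in>K. if a \<in> A j then 1 else 0)"
    using assms(1) by (simp add: sum.If_cases Int_def conj_commute)
  also have "\<dots> = (\<Sum>j\<in>K. \<Sum>a\<in>U. if a \<in> A j then 1 else 0)" by (rule sum.swap)
  also have "\<dots> = (\<Sum>j\<in>K. card (A j))"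
  proof (rule sum.cong[OF refl])
    fix j assume "j \<in> K"
    then have "U \<inter> {a. a \<in> A j} = A j" unfolding U_def by auto
    then show "(\<Sum>a\<in>U. if a \<in> A j then 1 else 0) = card (A j)"
      using fU by (simp add: sum.If_cases)
  qed
  finally show ?thesis unfolding U_def .
qed

lemma count_step:
  assumes "finite K" "K' \<subseteq> K" "j \<in> K" "x \<in> A j" "finite U" "U = (\<Union>i\<in>K. A i)"
    "U' = (\<Union>i\<in>K'. A' i)" "U' \<subseteq> U"
    and S: "\<And>a. {i\<in>K'. a \<in> A' i} = {i\<in>K. a \<in> A i} - (if a = x then {j} else {})"
  shows "(\<Sum>a\<in>U. mu l K A a) \<le> (\<Sum>a\<in>U'. mu l K' A' a) + (if card {i\<in>K. x \<in> A i} \<le> l then 1 else 0)"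
proof -
  have e1: "(\<Sum>a\<in>U'. mu l K' A' a) = (\<Sum>a\<in>U. mu l K' A' a)"
  proof (rule sum.mono_neutral_left[OF assms(5,8)])
    show "\<forall>a\<in>U - U'. mu l K' A' a = 0"
    proof
      fix a assume "a \<in> U - U'"
      then have "{i\<in>K'. a \<in> A' i} = {}" using assms(7) by auto
      then show "mu l K' A' a = 0" unfolding mu_def by (metis card.empty min_0R)
    qed
  qed
  define c where "c = card {i\<in>K. x \<in> A i}"
  have le: "mu l K A a \<le> mu l K' A' a + (if a = x then (if c \<le> l then 1 else 0) else 0)" for a
  proof (cases "a = x")
    case False then show ?thesis using S[of a] unfolding mu_def by simp
  next
    case True
    have jS: "j \<in> {i\<in>K. x \<in> A i}" using assms(3,4) by auto
    have fS: "finite {i\<in>K. x \<in> A i}" using assms(1) by auto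
    have cc: "card ({i\<in>K. x \<in> A i} - {j}) = c - 1" unfolding c_def using jS fS by simp
    have c1: "c \<ge> 1" unfolding c_def using jS fS
      by (metis One_nat_def Suc_leI card_gt_0_iff empty_iff)
    have m1: "mu l K A a = min l c" using True unfolding mu_def c_def by simp
    have "{i\<in>K'. a \<in> A' i} = {i\<in>K. x \<in> A i} - {j}" using S[of a] True by simp
    then have m2: "mu l K' A' a = min l (c - 1)" using cc unfolding mu_def by simp
    show ?thesis unfolding m1 m2 using c1 True by simp
  qed
  have "(\<Sum>a\<in>U. mu l K A a) \<le> (\<Sum>a\<in>U. mu l K' A' a + (if a = x then (if c \<le> l then 1 else 0) else 0))"
    by (rule sum_mono) (rule le)
  also have "\<dots> = (\<Sum>a\<in>U. mu l K' A' a) + (if c \<le> l then 1 else 0)"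
  proof -
    have xU: "x \<in> U" using assms(3,4,6) by auto
    show ?thesis using xU assms(5) by (simp add: sum.distrib)
  qed
  finally show ?thesis using e1 unfolding c_def by simp
qed

lemma (in comm_group) rp_finite:
  assumes "finite K" "\<forall>j\<in>K. finite (A j) \<and> A j \<subseteq> carrier G"
  shows "finite (rp G l K A)"
proof -
  have "rp G l K A \<subseteq> (\<lambda>(I,f). finprod G f I) ` (SIGMA I:Pow K. PiE I A)"
  proof
    fix y assume "y \<in> rp G l K A"
    then obtain I a where y: "y = finprod G a I" "I \<subseteq> K" "\<forall>i\<in>I. a i \<in> A i"
      unfolding rp_def by blast
    have "finprod G (restrict a I) I = finprod G a I"
      by (rule finprod_cong') (use y assms in auto)
    moreover have "(I, restrict a I) \<in> (SIGMA I:Pow K. PiE I A)" using y by auto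
    ultimately show "y \<in> (\<lambda>(I,f). finprod G f I) ` (SIGMA I:Pow K. PiE I A)"
      using y by (intro image_eqI[where x="(I, restrict a I)"]) auto
  qed
  moreover have "finite (SIGMA I:Pow K. PiE I A)"
    using assms by (intro finite_SigmaI finite_PiE) (auto dest: finite_subset)
  ultimately show ?thesis by (meson finite_imageI finite_subset)
qed

lemma rp_nonempty:
  assumes "finite K" "l \<le> card K" "\<forall>j\<in>K. A j \<noteq> {}"
  shows "rp G l K A \<noteq> {}"
proof -
  obtain I where I: "I \<subseteq> K" "card I = l" using obtain_subset_with_card_n[OF assms(2)] by blast
  define a where "a = (\<lambda>i. SOME y. y \<in> A i)"
  have "\<forall>i\<in>I. a i \<in> A i" unfolding a_def using I assms by (metis some_in_eq subsetD)
  then have "finprod G a I \<in> rp G l K A" unfolding rp_def using I by blast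
  then show ?thesis by auto
qed

lemma rp_mono:
  assumes "K' \<subseteq> K" "\<forall>i\<in>K'. A' i \<subseteq> A i"
  shows "rp G l K' A' \<subseteq> rp G l K A"
  using assms unfolding rp_def by blast

lemma (in comm_group) rp_carrier:
  assumes "\<forall>j\<in>K. A j \<subseteq> carrier G"
  shows "rp G l K A \<subseteq> carrier G"
proof
  fix y assume "y \<in> rp G l K A"
  then obtain I a where y: "y = finprod G a I" "I \<subseteq> K" "\<forall>i\<in>I. a i \<in> A i"
    unfolding rp_def by blast
  have "a \<in> I \<rightarrow> carrier G" using y assms by auto
  then show "y \<in> carrier G" using y by simp
qed

locale ocg = comm_group G for G (structure) +
  fixes P
  assumes Pc: "P \<subseteq> carrier G"
    and Pm: "x \<in> P \<Longrightarrow> y \<in> P \<Longrightarrow> x \<otimes> y \<in> P"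
    and P1: "\<one> \<notin> P"
    and Ptot: "x \<in> carrier G \<Longrightarrow> x \<noteq> \<one> \<Longrightarrow> x \<in> P \<or> inv x \<in> P"
begin

definition olt where "olt a b \<longleftrightarrow> b \<otimes> inv a \<in> P"

lemma olt_irrefl: "a \<in> carrier G \<Longrightarrow> \<not> olt a a"
  unfolding olt_def using P1 by simp

lemma olt_trans: "a \<in> carrier G \<Longrightarrow> b \<in> carrier G \<Longrightarrow> c \<in> carrier G \<Longrightarrow> olt a b \<Longrightarrow> olt b c \<Longrightarrow> olt a c"
proof -
  assume c: "a \<in> carrier G" "b \<in> carrier G" "c \<in> carrier G" and h: "olt a b" "olt b c"
  have "(c \<otimes> inv b) \<otimes> (b \<otimes> inv a) \<in> P" using h Pm unfolding olt_def by auto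
  moreover have "(c \<otimes> inv b) \<otimes> (b \<otimes> inv a) = c \<otimes> inv a" using c by (simp add: m_assoc[symmetric]) (simp add: m_assoc)
  ultimately show ?thesis unfolding olt_def by simp
qed

lemma olt_asym: "a \<in> carrier G \<Longrightarrow> b \<in> carrier G \<Longrightarrow> olt a b \<Longrightarrow> \<not> olt b a"
  using olt_trans[of a b a] olt_irrefl[of a] by blast

lemma olt_total: "a \<in> carrier G \<Longrightarrow> b \<in> carrier G \<Longrightarrow> a \<noteq> b \<Longrightarrow> olt a b \<or> olt b a"
proof -
  assume c: "a \<in> carrier G" "b \<in> carrier G" "a \<noteq> b"
  have "b \<otimes> inv a \<noteq> \<one>" using c inv_solve_right'[of "\<one>" b a] by simp
  then have "b \<otimes> inv a \<in> P \<or> inv (b \<otimes> inv a) \<in> P" using Ptot c by auto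
  moreover have "inv (b \<otimes> inv a) = a \<otimes> inv b" using c by (simp add: inv_mult_group m_comm)
  ultimately show ?thesis unfolding olt_def by auto
qed

lemma olt_mult: "a \<in> carrier G \<Longrightarrow> b \<in> carrier G \<Longrightarrow> c \<in> carrier G \<Longrightarrow> olt a b \<Longrightarrow> olt (a \<otimes> c) (b \<otimes> c)"
proof -
  assume c: "a \<in> carrier G" "b \<in> carrier G" "c \<in> carrier G" and h: "olt a b"
  have "(b \<otimes> c) \<otimes> inv (a \<otimes> c) = b \<otimes> inv a" using c
    by (simp add: inv_mult_group m_assoc m_comm m_lcomm)
  then show ?thesis using h unfolding olt_def by simp
qed

lemma ex_max: "finite S \<Longrightarrow> S \<noteq> {} \<Longrightarrow> S \<subseteq> carrier G \<Longrightarrow> \<exists>p\<in>S. \<forall>q\<in>S. q = p \<or> olt q p"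
proof (induction S rule: finite_ne_induct)
  case (singleton x) then show ?case by auto
next
  case (insert x F)
  then obtain p where p: "p \<in> F" "\<forall>q\<in>F. q = p \<or> olt q p" by auto
  have xc: "x \<in> carrier G" and Fc: "F \<subseteq> carrier G" using insert.prems by auto
  have pc: "p \<in> carrier G" using p Fc by auto
  show ?case
  proof (cases "olt p x")
    case True
    have "\<forall>q\<in>F. olt q x"
    proof
      fix q assume "q \<in> F"
      then have "q \<in> carrier G" "q = p \<or> olt q p" using Fc p by auto
      then show "olt q x" using True olt_trans[of q p x] xc pc by auto
    qed
    then show ?thesis by blast
  next
    case False
    then have "x = p \<or> olt x p" using olt_total[of x p] xc pc by auto
    then show ?thesis using p by blast
  qed
qed

lemma swap_lt:
  assumes "finite I" "i0 \<in> I" "j \<notin> I - {i0}" "\<forall>i\<in>I. a i \<in> carrier G" "x \<in> carrier G" "olt (a i0) x"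
  shows "olt (finprod G a I) (finprod G (a(j := x)) (insert j (I - {i0})))"
proof -
  have f: "a \<in> I - {i0} \<rightarrow> carrier G" using assms by auto
  have e1: "finprod G a I = a i0 \<otimes> finprod G a (I - {i0})"
  proof -
    have "I = insert i0 (I - {i0})" using assms by auto
    then have "finprod G a I = finprod G a (insert i0 (I - {i0}))" by simp
    also have "\<dots> = a i0 \<otimes> finprod G a (I - {i0})"
      by (rule finprod_insert) (use assms f in auto)
    finally show ?thesis .
  qed
  have e2: "finprod G (a(j := x)) (I - {i0}) = finprod G a (I - {i0})"
    by (rule finprod_cong') (use assms f in auto)
  have e3: "finprod G (a(j := x)) (insert j (I - {i0})) = x \<otimes> finprod G a (I - {i0})"
  proof -
    have "finprod G (a(j := x)) (insert j (I - {i0})) = (a(j := x)) j \<otimes> finprod G (a(j := x)) (I - {i0})"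
      by (rule finprod_insert) (use assms f in \<open>auto simp: Pi_def\<close>)
    then show ?thesis using e2 by simp
  qed
  have "finprod G a (I - {i0}) \<in> carrier G" using f by simp
  then show ?thesis unfolding e1 e3 using olt_mult assms by auto
qed

end

lemma (in ocg) main:
  "finite K \<Longrightarrow> l \<le> card K \<Longrightarrow> (\<forall>j\<in>K. A j \<noteq> {} \<and> finite (A j) \<and> A j \<subseteq> carrier G) \<Longrightarrow>
   int (\<Sum>x\<in>(\<Union>j\<in>K. A j). mu l K A x) \<le> int (card (rp G l K A)) + int l - 1"
proof (induction "\<Sum>j\<in>K. card (A j)" arbitrary: K A rule: less_induct)
  case less
  note adm = less.prems(3)
  define U where "U = (\<Union>j\<in>K. A j)"
  have finU: "finite U" using less.prems unfolding U_def by auto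
  have Uc: "U \<subseteq> carrier G" using adm unfolding U_def by auto
  have finrp: "finite (rp G l K A)" using rp_finite less.prems by auto
  have nerp: "rp G l K A \<noteq> {}" using rp_nonempty[of K l A G] less.prems by auto
  show ?case
  proof (cases "l < card K \<or> (\<exists>j\<in>K. 2 \<le> card (A j))")
    case False
    then have lK: "card K = l" and c1: "\<forall>j\<in>K. card (A j) \<le> 1" using less.prems by auto
    have c1': "\<forall>j\<in>K. card (A j) = 1" using c1 adm
      by (metis One_nat_def card_0_eq le_SucE le_zero_eq)
    have "(\<Sum>x\<in>U. mu l K A x) \<le> (\<Sum>x\<in>U. card {j\<in>K. x \<in> A j})"
      unfolding mu_def by (rule sum_mono) simp
    also have "\<dots> = (\<Sum>j\<in>K. card (A j))" unfolding U_def
      using double_count less.prems by auto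
    also have "\<dots> = l" using c1' lK by simp
    finally have "(\<Sum>x\<in>U. mu l K A x) \<le> l" .
    moreover have "card (rp G l K A) \<ge> 1" using finrp nerp
      by (simp add: Suc_leI card_gt_0_iff)
    ultimately show ?thesis unfolding U_def by linarith
  next
    case True
    obtain j x where jx: "j \<in> K" "x \<in> A j" and xmax: "\<forall>y\<in>A j. y = x \<or> olt y x"
      and sel: "(l < card K \<and> (\<forall>y\<in>U. y = x \<or> olt y x)) \<or> (card K = l \<and> 2 \<le> card (A j))"
    proof (cases "l < card K")
      case True
      then have "K \<noteq> {}" by auto
      then obtain j0 where "j0 \<in> K" by blast
      then have "A j0 \<noteq> {}" "A j0 \<subseteq> U" using adm unfolding U_def by auto
      then have "U \<noteq> {}" by blast
      then obtain x where x: "x \<in> U" "\<forall>y\<in>U. y = x \<or> olt y x" using ex_max[OF finU _ Uc] by blast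
      then obtain j where "j \<in> K" "x \<in> A j" unfolding U_def by auto
      moreover have "\<forall>y\<in>A j. y = x \<or> olt y x" using x \<open>j \<in> K\<close> unfolding U_def by auto
      ultimately show ?thesis using that True x by blast
    next
      case False
      have cK: "card K = l" using False less.prems(2) by simp
      from \<open>l < card K \<or> (\<exists>j\<in>K. 2 \<le> card (A j))\<close> False
      obtain j where j: "j \<in> K" "2 \<le> card (A j)" by blast
      have "finite (A j)" "A j \<noteq> {}" "A j \<subseteq> carrier G" using adm j(1) by auto
      then obtain x where "x \<in> A j" "\<forall>y\<in>A j. y = x \<or> olt y x" using ex_max[of "A j"] by blast
      then show ?thesis using that j cK by blast
    qed
    have xc: "x \<in> carrier G" using jx adm by auto
    obtain K' A' where K': "K' \<subseteq> K" "finite K'" "l \<le> card K'"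
       and adm': "\<forall>j\<in>K'. A' j \<noteq> {} \<and> finite (A' j) \<and> A' j \<subseteq> carrier G"
       and sub: "\<forall>i\<in>K'. A' i \<subseteq> A i"
       and smaller: "(\<Sum>j\<in>K'. card (A' j)) < (\<Sum>j\<in>K. card (A j))"
       and S: "\<And>a. {i\<in>K'. a \<in> A' i} = {i\<in>K. a \<in> A i} - (if a = x then {j} else {})"
       and P4: "j \<in> K' \<Longrightarrow> x \<notin> A' j"
    proof (cases "2 \<le> card (A j)")
      case True
      define A' where "A' = A(j := A j - {x})"
      have "A j - {x} \<noteq> {}"
      proof
        assume "A j - {x} = {}"
        then have "A j \<subseteq> {x}" by auto
        then have "card (A j) \<le> card {x}" by (rule card_mono[rotated]) simp
        then show False using True by simp
      qed
      then have adm': "\<forall>i\<in>K. A' i \<noteq> {} \<and> finite (A' i) \<and> A' i \<subseteq> carrier G"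
        using adm unfolding A'_def by auto
      have "(\<Sum>i\<in>K. card (A' i)) = (\<Sum>i\<in>K - {j}. card (A' i)) + card (A' j)"
        using less.prems jx by (simp add: sum.remove add.commute)
      also have "\<dots> = (\<Sum>i\<in>K - {j}. card (A i)) + card (A j) - 1"
        using jx adm True unfolding A'_def by (simp add: card_Diff_singleton)
      also have "\<dots> < (\<Sum>i\<in>K. card (A i))"
        using less.prems jx True by (simp add: sum.remove add.commute)
      finally have sm: "(\<Sum>i\<in>K. card (A' i)) < (\<Sum>i\<in>K. card (A i))" .
      have S: "{i\<in>K. a \<in> A' i} = {i\<in>K. a \<in> A i} - (if a = x then {j} else {})" for a
        unfolding A'_def by auto
      show ?thesis
        by (rule that[of K A']) (use less.prems adm' sm S in \<open>auto simp: A'_def\<close>)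
    next
      case False
      have "finite (A j)" using adm jx by auto
      then have "\<forall>a1\<in>A j. \<forall>a2\<in>A j. a1 = a2" using False card_le_Suc0_iff_eq[of "A j"] by simp
      then have Aj: "A j = {x}" using jx by auto
      then have lK: "l < card K" using sel by auto
      have sm: "(\<Sum>i\<in>K - {j}. card (A i)) < (\<Sum>i\<in>K. card (A i))"
        using less.prems jx Aj by (simp add: sum.remove)
      have S: "{i\<in>K - {j}. a \<in> A i} = {i\<in>K. a \<in> A i} - (if a = x then {j} else {})" for a
        using Aj by auto
      show ?thesis
        by (rule that[of "K - {j}" A]) (use less.prems adm sm S lK jx in auto)
    qed
    define U' where "U' = (\<Union>j\<in>K'. A' j)"
    have UU: "U' \<subseteq> U" using K' sub unfolding U_def U'_def by auto
    have cnt: "(\<Sum>a\<in>U. mu l K A a) \<le> (\<Sum>a\<in>U'. mu l K' A' a) + (if card {i\<in>K. x \<in> A i} \<le> l then 1 else 0)"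
      by (rule count_step[OF less.prems(1) K'(1) jx finU U_def U'_def UU S])
    have IH: "int (\<Sum>a\<in>U'. mu l K' A' a) \<le> int (card (rp G l K' A')) + int l - 1"
      using less.hyps[OF smaller K'(2,3) adm'] unfolding U'_def .
    have rsub: "rp G l K' A' \<subseteq> rp G l K A" using rp_mono[of K' K A' A G l] K' sub by blast
    have new: "\<exists>q\<in>rp G l K A. q \<notin> rp G l K' A'" if cl: "card {i\<in>K. x \<in> A i} \<le> l"
    proof -
      have "finite (rp G l K' A')" using rp_finite[of K' A' l] adm' K'(2) by auto
      moreover have "rp G l K' A' \<noteq> {}" using rp_nonempty[of K' l A' G] K' adm' by auto
      moreover have "rp G l K' A' \<subseteq> carrier G" using rp_carrier[of K' A' l] adm' by auto
      ultimately have "finite (rp G l K' A')" "rp G l K' A' \<noteq> {}" "rp G l K' A' \<subseteq> carrier G" by auto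
      then obtain p where p: "p \<in> rp G l K' A'" "\<forall>q\<in>rp G l K' A'. q = p \<or> olt q p"
        using ex_max by blast
      then obtain I a where Ia: "p = finprod G a I" "I \<subseteq> K'" "card I = l" "\<forall>i\<in>I. a i \<in> A' i"
        unfolding rp_def by blast
      have finI: "finite I" using Ia K' finite_subset by blast
      have ac: "\<forall>i\<in>I. a i \<in> carrier G" using Ia adm' by auto
      obtain i0 where i0: "i0 \<in> I" "j \<notin> I - {i0}" "olt (a i0) x"
      proof (cases "j \<in> I")
        case True
        then have "a j \<in> A j" "a j \<noteq> x" using Ia sub P4 K' by auto
        then have "olt (a j) x" using xmax by auto
        then show ?thesis using that True by auto
      next
        case False
        have s1: "l < card K \<and> (\<forall>y\<in>U. y = x \<or> olt y x)"
        proof (rule ccontr)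
          assume "\<not> ?thesis"
          then have "card K = l" using sel by auto
          then have "I = K" using Ia K' less.prems by (metis card_subset_eq order_trans)
          then show False using False jx by auto
        qed
        have "\<exists>i0\<in>I. a i0 \<noteq> x"
        proof (rule ccontr)
          assume "\<not> ?thesis"
          then have ax: "\<forall>i\<in>I. a i = x" by blast
          have "\<forall>i\<in>I. x \<in> A i"
          proof
            fix i assume "i \<in> I"
            then have "a i = x" "a i \<in> A' i" "i \<in> K'" using ax Ia(2,4) by auto
            then show "x \<in> A i" using sub by blast
          qed
          then have "insert j I \<subseteq> {i\<in>K. x \<in> A i}" using jx Ia(2) K'(1) by blast
          then have "card (insert j I) \<le> card {i\<in>K. x \<in> A i}"
            by (rule card_mono[rotated]) (use less.prems(1) in simp)
          then show False using False finI Ia(3) cl by simp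
        qed
        then obtain i0 where i0I: "i0 \<in> I" and ne: "a i0 \<noteq> x" by blast
        have "a i0 \<in> A' i0" "i0 \<in> K'" using i0I Ia(2,4) by auto
        then have "a i0 \<in> A i0" "i0 \<in> K" using sub K'(1) by auto
        then have "a i0 \<in> U" unfolding U_def by blast
        then have "olt (a i0) x" using s1 ne by blast
        moreover have "j \<notin> I - {i0}" using False by blast
        ultimately show ?thesis using that i0I by blast
      qed
      define q where "q = finprod G (a(j := x)) (insert j (I - {i0}))"
      have "olt p q" unfolding q_def Ia(1) by (rule swap_lt[OF finI i0(1,2) ac xc i0(3)])
      moreover have "q \<in> rp G l K A"
      proof -
        have "card (insert j (I - {i0})) = l" using i0 finI Ia
          by (metis card.insert card_Suc_Diff1 finite_Diff insert_Diff_single insert_absorb)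
        moreover have "insert j (I - {i0}) \<subseteq> K" using jx Ia K' by auto
        moreover have "\<forall>i\<in>insert j (I - {i0}). (a(j := x)) i \<in> A i" using Ia sub jx K' by auto
        ultimately show ?thesis unfolding q_def rp_def by blast
      qed
      moreover have "q \<notin> rp G l K' A'"
      proof
        assume "q \<in> rp G l K' A'"
        then have "q = p \<or> olt q p" using p by auto
        moreover have "p \<in> carrier G" "q \<in> carrier G" using \<open>rp G l K' A' \<subseteq> carrier G\<close> p \<open>q \<in> rp G l K' A'\<close> by auto
        ultimately show False using \<open>olt p q\<close> olt_irrefl olt_asym by blast
      qed
      ultimately show ?thesis by blast
    qed
    define S where "S = (\<Sum>a\<in>U. mu l K A a)"
    define S' where "S' = (\<Sum>a\<in>U'. mu l K' A' a)"
    define c where "c = card (rp G l K A)"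
    define c' where "c' = card (rp G l K' A')"
    have cnt2: "S \<le> S' + (if card {i\<in>K. x \<in> A i} \<le> l then 1 else 0)" using cnt unfolding S_def S'_def .
    have IH2: "int S' \<le> int c' + int l - 1" using IH unfolding S'_def c'_def .
    have "int S \<le> int c + int l - 1"
    proof (cases "card {i\<in>K. x \<in> A i} \<le> l")
      case True
      from new[OF True] obtain q where "q \<in> rp G l K A" "q \<notin> rp G l K' A'" by blast
      then have "rp G l K' A' \<subset> rp G l K A" using rsub by blast
      then have "card (rp G l K' A') < card (rp G l K A)"
        using finrp by (rule psubset_card_mono[rotated])
      then have "c' < c" unfolding c_def c'_def .
      moreover have "S \<le> S' + 1" using cnt2 True by simp
      ultimately show ?thesis using IH2 by linarith
    next
      case False
      then have "card (rp G l K' A') \<le> card (rp G l K A)"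
        using rsub finrp by (simp add: card_mono)
      then have "c' \<le> c" unfolding c_def c'_def .
      moreover have "S \<le> S'" using cnt2 False by simp
      ultimately show ?thesis using IH2 by linarith
    qed
    then show ?thesis unfolding S_def c_def U_def .
  qed
qed


theorem corollary1p6:
  fixes G (structure) and l m :: nat
  assumes "comm_group G" and "torsion_free G" and "2 \<le> l" and "l \<le> m"
  shows "(\<forall>A. admissible_seq G m A \<longrightarrow>
            int (card (restricted_products G l m A))
              \<ge> int (\<Sum>x\<in>(\<Union>j\<in>{1..m}. A j). mult_mu l m A x) - int l + 1)
       \<and> (\<exists>A. admissible_seq G m A \<and>
            int (card (restricted_products G l m A))
              = int (\<Sum>x\<in>(\<Union>j\<in>{1..m}. A j). mult_mu l m A x) - int l + 1)"
proof -
  interpret cg: comm_group G by fact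
  obtain P where P: "P \<subseteq> carrier G" "\<forall>x\<in>P. \<forall>y\<in>P. x \<otimes> y \<in> P" "\<one> \<notin> P"
     "\<forall>x\<in>carrier G. x \<noteq> \<one> \<longrightarrow> x \<in> P \<or> inv x \<in> P"
    using cg.torsion_free_cone[OF assms(2)] by blast
  interpret o: ocg G P
    by unfold_locales (use P in auto)
  have part1: "\<forall>A. admissible_seq G m A \<longrightarrow>
            int (card (restricted_products G l m A))
              \<ge> int (\<Sum>x\<in>(\<Union>j\<in>{1..m}. A j). mult_mu l m A x) - int l + 1"
  proof (intro allI impI)
    fix A assume adm: "admissible_seq G m A"
    have main: "int (\<Sum>x\<in>(\<Union>j\<in>{1..m}. A j). mu l {1..m} A x) \<le> int (card (rp G l {1..m} A)) + int l - 1"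
      using o.main[of "{1..m}" l A] adm assms(4) unfolding admissible_seq_def by auto
    have e1: "mult_mu l m A = mu l {1..m} A" by (rule ext) (simp add: mu_def mult_mu_def)
    have e2: "restricted_products G l m A = rp G l {1..m} A" by (simp add: rp_def restricted_products_def)
    show "int (card (restricted_products G l m A))
              \<ge> int (\<Sum>x\<in>(\<Union>j\<in>{1..m}. A j). mult_mu l m A x) - int l + 1"
      unfolding e1 e2 using main by linarith
  qed
  have part2: "\<exists>A. admissible_seq G m A \<and>
            int (card (restricted_products G l m A))
              = int (\<Sum>x\<in>(\<Union>j\<in>{1..m}. A j). mult_mu l m A x) - int l + 1"
  proof (intro exI conjI)
    show "admissible_seq G m (\<lambda>j. {\<one>})" by (simp add: admissible_seq_def)
    have r: "restricted_products G l m (\<lambda>j. {\<one>}) = {\<one>}"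
    proof
      show "restricted_products G l m (\<lambda>j. {\<one>}) \<subseteq> {\<one>}"
      proof
        fix y assume "y \<in> restricted_products G l m (\<lambda>j. {\<one>})"
        then have "\<exists>(I::nat set) a. y = finprod G a I \<and> (\<forall>i\<in>I. a i \<in> {\<one>})"
          unfolding restricted_products_def by auto
        then obtain I :: "nat set" and a where y: "y = finprod G a I" "\<forall>i\<in>I. a i \<in> {\<one>}"
          by blast
        have "finprod G a I = \<one>" by (rule cg.finprod_one_eqI) (use y in auto)
        then show "y \<in> {\<one>}" using y by simp
      qed
    next
      have "finprod G (\<lambda>i. \<one>) {1..l} \<in> restricted_products G l m (\<lambda>j. {\<one>})"
        unfolding restricted_products_def using assms(4)
        by (intro CollectI exI[of _ "{1..l}"] exI[of _ "\<lambda>i. \<one>"]) auto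
      then show "{\<one>} \<subseteq> restricted_products G l m (\<lambda>j. {\<one>})" by simp
    qed
    have u: "(\<Union>j\<in>{1..m}. (\<lambda>j. {\<one>}) j) = {\<one>}" using assms by auto
    have s: "{j \<in> {1..m}. \<one> \<in> (\<lambda>j. {\<one>}) j} = {1..m}" by auto
    have mm: "mult_mu l m (\<lambda>j. {\<one>}) \<one> = l" unfolding mult_mu_def s using assms(4) by simp
    show "int (card (restricted_products G l m (\<lambda>j. {\<one>})))
              = int (\<Sum>x\<in>(\<Union>j\<in>{1..m}. (\<lambda>j. {\<one>}) j). mult_mu l m (\<lambda>j. {\<one>}) x) - int l + 1"
      unfolding r u using mm by simp
  qed
  show ?thesis using part1 part2 by blast
qed

end
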